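(* Define $\tau_{k} = \{T \mid T \subseteq \Omega, |T| = k \in \mathbb{N} \}$ and let $\mathcal{B}_m$ denote any set of binary strings, such that the strings are of length $m$ or less. Let \[ R = \{(T, F) \mid T \in \tau_{k}, F \in \mathcal{B}_m \}, \quad R_{q_{\text{min}}} = \{(T, F) \mid T \in \tau_{k}, F \in \mathcal{B}_m, \phi(T,F) \geq q_{\text{min}} \}, \] where $\phi(T,F)$ is the decomposable probability-of-success metric for algorithm $\mathcal{A}$ on problem $(\Omega, T, F)$. Then for any $m \in \mathbb{N}$, \[ \frac{|R_{q_{\text{min}}}|}{|R|} \leq \frac{p}{q_{\text{min}}}, \] where $p = k/|\Omega|$.
   Context: Algorithmic search framework: finite discrete search space $\Omega$, target sets $T\subseteq\Omega$ with indicator vectors $\mathbf{t}$, information resources $F$ (here binary strings), and a fixed search algorithm $\mathcal{A}$. A probability-of-success metric $\phi$ is decomposable if there exists a probability vector $\mathbf{P}_{\phi,f}$ over $\Omega$, not a function of the target, with $\phi(t,f)=\mathbf{t}^{\top}\mathbf{P}_{\phi,f}=P_\phi(X\in t\mid f)$. $q_{\text{min}}\in(0,1]$ is a success threshold. *)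

theory Defs
  imports Complex_Main
begin

definition tau :: "'a set \<Rightarrow> nat \<Rightarrow> 'a set set" where
  "tau \<Omega> k = {T. T \<subseteq> \<Omega> \<and> card T = k}"

definition decomposable ::
  "'a set \<Rightarrow> ('a set \<Rightarrow> bool list \<Rightarrow> real) \<Rightarrow> bool" where
  "decomposable \<Omega> \<phi> \<longleftrightarrow>
     (\<exists>P :: bool list \<Rightarrow> 'a \<Rightarrow> real.
        (\<forall>f. \<forall>x\<in>\<Omega>. 0 \<le> P f x) \<and>
        (\<forall>f. (\<Sum>x\<in>\<Omega>. P f x) = 1) \<and>
        (\<forall>f T. T \<subseteq> \<Omega> \<longrightarrow> \<phi> T f = (\<Sum>x\<in>T. P f x)))"

end

theory Submission
  imports Defs
begin

lemma count_const:
  assumes fin: "finite \<Omega>" and x: "x \<in> \<Omega>"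
  shows "card {T \<in> tau \<Omega> k. x \<in> T} = (if k = 0 then 0 else (card \<Omega> - 1) choose (k - 1))"
proof (cases "k = 0")
  case True
  have "{T \<in> tau \<Omega> k. x \<in> T} = {}" using True fin unfolding tau_def
    by (auto dest: finite_subset)
  then have "card {T \<in> tau \<Omega> k. x \<in> T} = 0" by (metis card.empty)
  then show ?thesis using True by simp
next
  case False
  have "bij_betw (insert x) {S. S \<subseteq> \<Omega> - {x} \<and> card S = k - 1} {T \<in> tau \<Omega> k. x \<in> T}"
  proof (rule bij_betw_byWitness[where f' = "\<lambda>T. T - {x}"])
    show "\<forall>a\<in>{S. S \<subseteq> \<Omega> - {x} \<and> card S = k - 1}. insert x a - {x} = a" by auto
    show "\<forall>a'\<in>{T \<in> tau \<Omega> k. x \<in> T}. insert x (a' - {x}) = a'" by auto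
    show "insert x ` {S. S \<subseteq> \<Omega> - {x} \<and> card S = k - 1} \<subseteq> {T \<in> tau \<Omega> k. x \<in> T}"
    proof
      fix T assume "T \<in> insert x ` {S. S \<subseteq> \<Omega> - {x} \<and> card S = k - 1}"
      then obtain S where S: "S \<subseteq> \<Omega> - {x}" "card S = k - 1" "T = insert x S" by auto
      have "finite S" using S fin finite_subset by blast
      then have "card T = k" using S False by (auto simp: card_insert_if)
      then show "T \<in> {T \<in> tau \<Omega> k. x \<in> T}" using S x by (auto simp: tau_def)
    qed
    show "(\<lambda>T. T - {x}) ` {T \<in> tau \<Omega> k. x \<in> T} \<subseteq> {S. S \<subseteq> \<Omega> - {x} \<and> card S = k - 1}"
    proof
      fix S assume "S \<in> (\<lambda>T. T - {x}) ` {T \<in> tau \<Omega> k. x \<in> T}"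
      then obtain T where T: "T \<subseteq> \<Omega>" "card T = k" "x \<in> T" "S = T - {x}" by (auto simp: tau_def)
      have "finite T" using T fin finite_subset by blast
      then show "S \<in> {S. S \<subseteq> \<Omega> - {x} \<and> card S = k - 1}" using T by auto
    qed
  qed
  then have "card {T \<in> tau \<Omega> k. x \<in> T} = card {S. S \<subseteq> \<Omega> - {x} \<and> card S = k - 1}"
    by (simp add: bij_betw_same_card)
  also have "\<dots> = card (\<Omega> - {x}) choose (k - 1)" using fin by (simp add: n_subsets)
  finally show ?thesis using False x fin by simp
qed

lemma fin_tau: "finite \<Omega> \<Longrightarrow> finite (tau \<Omega> k)"
  unfolding tau_def by (rule finite_subset[of _ "Pow \<Omega>"]) auto

lemma sum_over_tau:
  assumes fin: "finite \<Omega>"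
  shows "(\<Sum>T\<in>tau \<Omega> k. \<Sum>x\<in>T. P x) = (\<Sum>x\<in>\<Omega>. P x) * real (if k = 0 then 0 else (card \<Omega> - 1) choose (k - 1))"
proof -
  define c where "c = real (if k = 0 then 0 else (card \<Omega> - 1) choose (k - 1))"
  have "(\<Sum>T\<in>tau \<Omega> k. \<Sum>x\<in>T. P x) = (\<Sum>T\<in>tau \<Omega> k. \<Sum>x\<in>\<Omega>. if x \<in> T then P x else 0)"
  proof (rule sum.cong[OF refl])
    fix T assume "T \<in> tau \<Omega> k"
    then have "T \<subseteq> \<Omega>" by (simp add: tau_def)
    then show "(\<Sum>x\<in>T. P x) = (\<Sum>x\<in>\<Omega>. if x \<in> T then P x else 0)"
      using fin by (simp add: sum.If_cases Int_absorb1 inf.absorb2)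
  qed
  also have "\<dots> = (\<Sum>x\<in>\<Omega>. \<Sum>T\<in>tau \<Omega> k. if x \<in> T then P x else 0)"
    by (rule sum.swap)
  also have "\<dots> = (\<Sum>x\<in>\<Omega>. P x * c)"
  proof (rule sum.cong[OF refl])
    fix x assume x: "x \<in> \<Omega>"
    have "(\<Sum>T\<in>tau \<Omega> k. if x \<in> T then P x else 0) = real (card {T \<in> tau \<Omega> k. x \<in> T}) * P x"
      using fin_tau[OF fin] by (simp add: sum.inter_filter[symmetric])
    also have "\<dots> = P x * c" using count_const[OF fin x, of k] by (simp add: c_def mult.commute)
    finally show "(\<Sum>T\<in>tau \<Omega> k. if x \<in> T then P x else 0) = P x * c" .
  qed
  also have "\<dots> = (\<Sum>x\<in>\<Omega>. P x) * c" by (simp add: sum_distrib_right)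
  finally show ?thesis by (simp add: c_def)
qed

lemma card_tau_rel:
  assumes fin: "finite \<Omega>"
  shows "real k * real (card (tau \<Omega> k)) = real (card \<Omega>) * real (if k = 0 then 0 else (card \<Omega> - 1) choose (k - 1))"
proof -
  have "(\<Sum>T\<in>tau \<Omega> k. \<Sum>x\<in>T. (1::real)) = real k * real (card (tau \<Omega> k))"
    by (simp add: tau_def)
  moreover have "(\<Sum>T\<in>tau \<Omega> k. \<Sum>x\<in>T. (1::real)) = (\<Sum>x\<in>\<Omega>. (1::real)) * real (if k = 0 then 0 else (card \<Omega> - 1) choose (k - 1))"
    by (rule sum_over_tau[OF fin])
  ultimately show ?thesis by simp
qed

theorem theorem4:
  fixes \<Omega> :: "'a set" and k m :: nat and B :: "bool list set"
    and \<phi> :: "'a set \<Rightarrow> bool list \<Rightarrow> real" and qmin :: real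
  assumes "finite \<Omega>" and "\<Omega> \<noteq> {}"
    and "\<forall>F\<in>B. length F \<le> m"
    and "decomposable \<Omega> \<phi>"
    and "0 < qmin" and "qmin \<le> 1"
  shows "real (card {(T, F). T \<in> tau \<Omega> k \<and> F \<in> B \<and> \<phi> T F \<ge> qmin})
           / real (card {(T, F). T \<in> tau \<Omega> k \<and> F \<in> B})
         \<le> (real k / real (card \<Omega>)) / qmin"
proof -
  note fin = assms(1)
  obtain P where P0: "\<forall>f. \<forall>x\<in>\<Omega>. 0 \<le> P f x" and P1: "\<forall>f. (\<Sum>x\<in>\<Omega>. P f x) = 1"
    and Pphi: "\<forall>f T. T \<subseteq> \<Omega> \<longrightarrow> \<phi> T f = (\<Sum>x\<in>T. P f x)"
    using assms(4) unfolding decomposable_def by blast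
  have finB: "finite B"
    by (rule finite_subset[OF _ finite_lists_length_le[of UNIV m]]) (use assms(3) in auto)
  have finT: "finite (tau \<Omega> k)" by (rule fin_tau[OF fin])
  define n where "n = real (card \<Omega>)"
  have npos: "n > 0" using fin assms(2) by (simp add: n_def card_gt_0_iff)
  define N where "N = real (card (tau \<Omega> k))"
  define G where "G F = {T \<in> tau \<Omega> k. \<phi> T F \<ge> qmin}" for F
  have sumphi: "(\<Sum>T\<in>tau \<Omega> k. \<phi> T F) = real k * N / n" for F
  proof -
    have "(\<Sum>T\<in>tau \<Omega> k. \<phi> T F) = (\<Sum>T\<in>tau \<Omega> k. \<Sum>x\<in>T. P F x)"
      using Pphi by (intro sum.cong) (auto simp: tau_def)
    also have "\<dots> = real (if k = 0 then 0 else (card \<Omega> - 1) choose (k - 1))"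
      using sum_over_tau[OF fin, where k=k and P="P F"] P1 by simp
    also have "\<dots> = real k * N / n" using card_tau_rel[OF fin, of k] npos
      by (simp add: N_def n_def field_simps)
    finally show ?thesis .
  qed
  have phinn: "T \<in> tau \<Omega> k \<Longrightarrow> \<phi> T F \<ge> 0" for T F
    using Pphi P0 by (auto simp: tau_def intro!: sum_nonneg)
  have bound: "qmin * real (card (G F)) \<le> real k * N / n" for F
  proof -
    have "qmin * real (card (G F)) = (\<Sum>T\<in>G F. qmin)" by simp
    also have "\<dots> \<le> (\<Sum>T\<in>G F. \<phi> T F)" by (intro sum_mono) (simp add: G_def)
    also have "\<dots> \<le> (\<Sum>T\<in>tau \<Omega> k. \<phi> T F)"
      by (rule sum_mono2[OF finT]) (auto simp: G_def phinn)
    finally show ?thesis using sumphi by simp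
  qed
  have eq1: "{(T, F). T \<in> tau \<Omega> k \<and> F \<in> B \<and> \<phi> T F \<ge> qmin} = (\<lambda>(F,T). (T,F)) ` (SIGMA F:B. G F)"
    by (auto simp: G_def image_iff)
  have cq: "card {(T, F). T \<in> tau \<Omega> k \<and> F \<in> B \<and> \<phi> T F \<ge> qmin} = (\<Sum>F\<in>B. card (G F))"
  proof -
    have "card ((\<lambda>(F,T). (T,F)) ` (SIGMA F:B. G F)) = card (SIGMA F:B. G F)"
      by (rule card_image) (auto simp: inj_on_def)
    also have "\<dots> = (\<Sum>F\<in>B. card (G F))"
      using finB finT by (intro card_SigmaI) (auto simp: G_def)
    finally show ?thesis using eq1 by simp
  qed
  have eq2: "{(T, F). T \<in> tau \<Omega> k \<and> F \<in> B} = tau \<Omega> k \<times> B" by auto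
  have cR: "real (card {(T, F). T \<in> tau \<Omega> k \<and> F \<in> B}) = N * real (card B)"
    unfolding eq2 by (simp add: card_cartesian_product N_def)
  have num: "qmin * real (card {(T, F). T \<in> tau \<Omega> k \<and> F \<in> B \<and> \<phi> T F \<ge> qmin}) \<le> real (card B) * (real k * N / n)"
  proof -
    have "qmin * real (card {(T, F). T \<in> tau \<Omega> k \<and> F \<in> B \<and> \<phi> T F \<ge> qmin}) = (\<Sum>F\<in>B. qmin * real (card (G F)))"
      by (simp add: cq sum_distrib_left)
    also have "\<dots> \<le> (\<Sum>F\<in>B. real k * N / n)" by (rule sum_mono) (rule bound)
    finally show ?thesis by simp
  qed
  define a where "a = real (card {(T, F). T \<in> tau \<Omega> k \<and> F \<in> B \<and> \<phi> T F \<ge> qmin})"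
  define D where "D = N * real (card B)"
  have num': "qmin * a \<le> D * (real k / n)" 
  proof -
    have "real (card B) * (real k * N / n) = D * (real k / n)" unfolding D_def by simp
    then show ?thesis using num unfolding a_def by linarith
  qed
  have rhs0: "0 \<le> (real k / real (card \<Omega>)) / qmin" using assms(5) by simp
  show ?thesis
  proof (cases "D = 0")
    case True
    show ?thesis unfolding cR D_def[symmetric] True division_ring_divide_zero using rhs0 .
  next
    case False
    have "0 \<le> D" unfolding D_def N_def by simp
    with False have pos: "D > 0" by linarith
    have "a / D = (qmin * a) / (qmin * D)" using assms(5) by simp
    also have "\<dots> \<le> (D * (real k / n)) / (qmin * D)"
      using num' pos assms(5) by (intro divide_right_mono) auto
    also have "\<dots> = (real k / n) / qmin" using pos by simp
    finally have "a / D \<le> (real k / n) / qmin" .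
    then show ?thesis unfolding cR D_def[symmetric] a_def[symmetric] n_def .
  qed
qed

end
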